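(* In the receding-horizon platoon coordination setting at decision instance $t^\star_n$ described in the context, with random travel times (and remaining times) whose conditional distribution given the observed history is supported on a countable set, the game $G^s_n=(\mathcal N,\mathcal W_n,\{U^i_n\}_{i\in\mathcal N})$, where $U^i_n(\boldsymbol w^i_n,\boldsymbol w^{-i}_n)=\mathbb E\big[U^i_n(\boldsymbol w^i_n,\boldsymbol w^{-i}_n,\boldsymbol\tau)\mid \boldsymbol\tau^{\rm h}_n=\tau^{\rm h}_n\big]$, is an exact potential game and thus admits at least one pure Nash equilibrium.
   Context: Setting: a directed graph $\mathcal G=(\mathcal V,\mathcal E)$, vehicles $\mathcal N=\{1,\dots,N\}$, vehicle $i$ having a fixed path of edges $e^i_1,\dots,e^i_{|\mathcal P^i|}$ with $e^i_k$ from node $v^i_k$ to $v^i_{k+1}$. At a decision instance $t^\star_n\in\mathbb Z_+$, each vehicle $i$ decides waiting times $\boldsymbol w^i_n=(w^i_{a_i,n},\dots,w^i_{b_i,n})\in\mathbb Z_+^{b_i-a_i+1}$ at nodes $v^i_{a_i},\dots,v^i_{b_i}$, for given indices $1\le a_i\le b_i\le|\mathcal P^i|$ (in the receding-horizon scheme with horizon $H$: if vehicle $i$ is on edge $e^i_j$ then $a_i=j+1$, $b_i=j+H$; if at node $v^i_k$ then $a_i=k$, $b_i=k+H$), chosen from a finite set $\mathcal W^i_n$; $\mathcal W_n=\prod_i\mathcal W^i_n$. A realization $\tau$ of the random element $\boldsymbol\tau$ specifies travel times $\tau(e,t)\in\mathbb Z_+$ for all $e,t$ and, for each $i$, the number $\tau^i_n\in\mathbb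 Z_+$ of time steps until vehicle $i$ reaches node $v^i_{a_i}$ ($0$ if it is already there). $\boldsymbol\tau^{\rm h}_n=\tau^{\rm h}_n$ is the observed history of travel times up to $t^\star_n$, and expectations use the conditional probabilities $\Pr(\boldsymbol\tau=\tau\mid\boldsymbol\tau^{\rm h}_n=\tau^{\rm h}_n)$. Given $\tau$ and $\boldsymbol w_n$, departure times are $d^i_{a_i}=t^\star_n+\tau^i_n+w^i_{a_i,n}$, $d^i_{l+1}=d^i_l+\tau(e^i_l,d^i_l)+w^i_{l+1,n}$ for $a_i\le l<b_i$; $C_n(e,t,\boldsymbol w_n,\tau)=\{i:\exists k\in\{a_i,\dots,b_i\},\ e^i_k=e,\ d^i_k=t\}$; and with a reward function $R:\mathbb Z_{\ge1}\times\mathcal E\to\mathbb R$ and waiting costs $\Lambda_i:\mathcal W^i_n\to\mathbb R$, $$U^i_n(\boldsymbol w^i_n,\boldsymbol w^{-i}_n,\tau)=\sum_{k=a_i}^{b_i}R\big(|C_n(e^i_k,d^i_k,\boldsymbol w_n,\tau)|,e^i_k\big)-\Lambda_i(\boldsymbol w^i_n).$$ An exact potential game is one admitting a function $\Phi$ on action profiles such that any unilateral action change of a player changes $\Phi$ by exactly the change of that player's utility; a pure Nash equilibrium is a profile from which no player can profitably deviate unilaterally. *)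

theory Defs
  imports "HOL-Probability.Probability_Mass_Function"
begin

text \<open>A realization of the random element: travel times tau(e,t) and, for every vehicle,
  the remaining time until it reaches node v^i_{a_i}.\<close>
type_synonym ('e, 'i) realization = "('e \<Rightarrow> nat \<Rightarrow> nat) \<times> ('i \<Rightarrow> nat)"

text \<open>Departure time at node index a + m, for a vehicle with pth p, first decision index a,
  waiting vector w (indexed by node index), travel times tt, remaining time r.\<close>
primrec dep_off :: "nat \<Rightarrow> (nat \<Rightarrow> 'e) \<Rightarrow> nat \<Rightarrow> (nat \<Rightarrow> nat) \<Rightarrow> ('e \<Rightarrow> nat \<Rightarrow> nat)
                     \<Rightarrow> nat \<Rightarrow> nat \<Rightarrow> nat" where
  "dep_off ts p a w tt r 0 = ts + r + w a"
| "dep_off ts p a w tt r (Suc m) =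
     dep_off ts p a w tt r m + tt (p (a + m)) (dep_off ts p a w tt r m) + w (a + m + 1)"

text \<open>d^i_k for k >= a_i.\<close>
definition departure :: "nat \<Rightarrow> ('i \<Rightarrow> nat \<Rightarrow> 'e) \<Rightarrow> ('i \<Rightarrow> nat)
     \<Rightarrow> ('i \<Rightarrow> nat \<Rightarrow> nat) \<Rightarrow> ('e, 'i) realization \<Rightarrow> 'i \<Rightarrow> nat \<Rightarrow> nat" where
  "departure ts pth a w \<tau> i k = dep_off ts (pth i) (a i) (w i) (fst \<tau>) (snd \<tau> i) (k - a i)"

definition coll :: "nat \<Rightarrow> ('i \<Rightarrow> nat \<Rightarrow> 'e) \<Rightarrow> ('i \<Rightarrow> nat) \<Rightarrow> ('i \<Rightarrow> nat)
     \<Rightarrow> ('i \<Rightarrow> nat \<Rightarrow> nat) \<Rightarrow> ('e, 'i) realization \<Rightarrow> 'e \<Rightarrow> nat \<Rightarrow> 'i set" where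
  "coll ts pth a b w \<tau> e t =
     {j. \<exists>k\<in>{a j..b j}. pth j k = e \<and> departure ts pth a w \<tau> j k = t}"

definition utility :: "nat \<Rightarrow> ('i \<Rightarrow> nat \<Rightarrow> 'e) \<Rightarrow> ('i \<Rightarrow> nat) \<Rightarrow> ('i \<Rightarrow> nat)
     \<Rightarrow> (nat \<Rightarrow> 'e \<Rightarrow> real) \<Rightarrow> ('i \<Rightarrow> (nat \<Rightarrow> nat) \<Rightarrow> real)
     \<Rightarrow> 'i \<Rightarrow> ('i \<Rightarrow> nat \<Rightarrow> nat) \<Rightarrow> ('e, 'i) realization \<Rightarrow> real" where
  "utility ts pth a b R \<Lambda> i w \<tau> =
     (\<Sum>k = a i..b i. R (card (coll ts pth a b w \<tau> (pth i k) (departure ts pth a w \<tau> i k)))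
                        (pth i k)) - \<Lambda> i (w i)"

text \<open>Expected utility given the (conditional) distribution P of the random element.\<close>
definition exp_utility :: "('e, 'i) realization pmf \<Rightarrow> nat \<Rightarrow> ('i \<Rightarrow> nat \<Rightarrow> 'e) \<Rightarrow> ('i \<Rightarrow> nat)
     \<Rightarrow> ('i \<Rightarrow> nat) \<Rightarrow> (nat \<Rightarrow> 'e \<Rightarrow> real) \<Rightarrow> ('i \<Rightarrow> (nat \<Rightarrow> nat) \<Rightarrow> real)
     \<Rightarrow> 'i \<Rightarrow> ('i \<Rightarrow> nat \<Rightarrow> nat) \<Rightarrow> real" where
  "exp_utility P ts pth a b R \<Lambda> i w =
     measure_pmf.expectation P (\<lambda>\<tau>. utility ts pth a b R \<Lambda> i w \<tau>)"

definition exact_potential_game :: "('i \<Rightarrow> 'a set) \<Rightarrow> ('i \<Rightarrow> ('i \<Rightarrow> 'a) \<Rightarrow> real) \<Rightarrow> bool" where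
  "exact_potential_game A u \<longleftrightarrow>
     (\<exists>\<Phi> :: ('i \<Rightarrow> 'a) \<Rightarrow> real. \<forall>w \<in> Pi UNIV A. \<forall>i. \<forall>x \<in> A i.
        u i (w(i := x)) - u i w = \<Phi> (w(i := x)) - \<Phi> w)"

definition pure_nash :: "('i \<Rightarrow> 'a set) \<Rightarrow> ('i \<Rightarrow> ('i \<Rightarrow> 'a) \<Rightarrow> real) \<Rightarrow> ('i \<Rightarrow> 'a) \<Rightarrow> bool" where
  "pure_nash A u w \<longleftrightarrow> w \<in> Pi UNIV A \<and> (\<forall>i. \<forall>x \<in> A i. u i (w(i := x)) \<le> u i w)"

end

theory Submission
  imports Defs
begin

definition res_of :: "nat \<Rightarrow> ('i \<Rightarrow> nat \<Rightarrow> 'e) \<Rightarrow> ('i \<Rightarrow> nat) \<Rightarrow> ('i \<Rightarrow> nat)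
     \<Rightarrow> ('i \<Rightarrow> nat \<Rightarrow> nat) \<Rightarrow> ('e, 'i) realization \<Rightarrow> 'i \<Rightarrow> ('e \<times> nat) set" where
  "res_of ts pth a b w \<tau> j = (\<lambda>k. (pth j k, departure ts pth a w \<tau> j k)) ` {a j..b j}"

definition allres :: "nat \<Rightarrow> ('i \<Rightarrow> nat \<Rightarrow> 'e) \<Rightarrow> ('i \<Rightarrow> nat) \<Rightarrow> ('i \<Rightarrow> nat)
     \<Rightarrow> ('i \<Rightarrow> nat \<Rightarrow> nat) \<Rightarrow> ('e, 'i) realization \<Rightarrow> ('e \<times> nat) set" where
  "allres ts pth a b w \<tau> = (\<lambda>(j,k). (pth j k, departure ts pth a w \<tau> j k)) ` (SIGMA j:UNIV. {a j..b j})"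

definition Fsum :: "(nat \<Rightarrow> 'e \<Rightarrow> real) \<Rightarrow> nat \<Rightarrow> 'e \<Rightarrow> real" where
  "Fsum R n e = (\<Sum>m\<in>{1..n}. R m e)"

definition pot where
  "pot ts pth a b R w \<tau> = (\<Sum>r\<in>allres ts pth a b w \<tau>.
      Fsum R (card (coll ts pth a b w \<tau> (fst r) (snd r))) (fst r))"

definition rew where
  "rew ts pth a b R i w \<tau> = (\<Sum>k = a i..b i. R (card (coll ts pth a b w \<tau> (pth i k) (departure ts pth a w \<tau> i k)))
                        (pth i k))"

lemma Fsum_Suc: "Fsum R (Suc m) e = Fsum R m e + R (Suc m) e"
  unfolding Fsum_def by (simp add: atLeastAtMostSuc_conv add.commute)

lemma Fsum_0: "Fsum R 0 e = 0"
  unfolding Fsum_def by simp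

lemma departure_upd: "j \<noteq> i \<Longrightarrow> departure ts pth a (w(i:=x)) \<tau> j k = departure ts pth a w \<tau> j k"
  unfolding departure_def by simp

lemma res_upd: "j \<noteq> i \<Longrightarrow> res_of ts pth a b (w(i:=x)) \<tau> j = res_of ts pth a b w \<tau> j"
  unfolding res_of_def using departure_upd by (metis (no_types, lifting))

lemma mem_coll: "j \<in> coll ts pth a b w \<tau> e t \<longleftrightarrow> (e, t) \<in> res_of ts pth a b w \<tau> j"
  unfolding coll_def res_of_def by auto

lemma res_sub: "res_of ts pth a b w \<tau> j \<subseteq> allres ts pth a b w \<tau>"
  unfolding res_of_def allres_def by force

lemma coll_empty: "(e,t) \<notin> allres ts pth a b w \<tau> \<Longrightarrow> coll ts pth a b w \<tau> e t = {}"
  by (rule equals0I) (metis mem_coll res_sub subsetD)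

lemma card_split: "finite C \<Longrightarrow> card C = card (C - {i}) + (if i \<in> C then 1 else 0)"
proof (cases "i \<in> C")
  case True
  assume f: "finite C"
  have "card C = Suc (card (C - {i}))"
    using card.remove[OF f True] .
  then show ?thesis using True by simp
next
  case False
  then show ?thesis by simp
qed

lemma Fsum_diff:
  fixes pth :: "'i::finite \<Rightarrow> nat \<Rightarrow> 'e"
  shows
  "Fsum R (card (coll ts pth a b (w(i:=x)) \<tau> e t)) e - Fsum R (card (coll ts pth a b w \<tau> e t)) e
   = (if (e,t) \<in> res_of ts pth a b (w(i:=x)) \<tau> i then R (card (coll ts pth a b (w(i:=x)) \<tau> e t)) e else 0)
   - (if (e,t) \<in> res_of ts pth a b w \<tau> i then R (card (coll ts pth a b w \<tau> e t)) e else 0)"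
proof -
  let ?C = "coll ts pth a b w \<tau> e t" and ?C' = "coll ts pth a b (w(i:=x)) \<tau> e t"
  have eq: "?C' - {i} = ?C - {i}"
  proof (rule set_eqI)
    fix j
    show "j \<in> ?C' - {i} \<longleftrightarrow> j \<in> ?C - {i}"
    proof (cases "j = i")
      case True then show ?thesis by simp
    next
      case False
      have "res_of ts pth a b (w(i:=x)) \<tau> j = res_of ts pth a b w \<tau> j"
        by (rule res_upd[OF False])
      then show ?thesis using False by (simp add: mem_coll)
    qed
  qed
  have f1: "finite ?C" by simp
  have f2: "finite ?C'" by simp
  define m where "m = card (?C - {i})"
  define P where "P = ((e,t) \<in> res_of ts pth a b w \<tau> i)"
  define P' where "P' = ((e,t) \<in> res_of ts pth a b (w(i:=x)) \<tau> i)"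
  have c1: "card ?C = m + (if P then 1 else 0)"
    using card_split[OF f1, of i] unfolding m_def P_def mem_coll .
  have c2: "card ?C' = m + (if P' then 1 else 0)"
    using card_split[OF f2, of i] unfolding m_def P'_def mem_coll eq .
  show ?thesis
    unfolding P_def[symmetric] P'_def[symmetric] c1 c2
    by (cases P; cases P') (simp_all add: Fsum_Suc)
qed

lemma res_reindex:
  assumes "inj_on (pth i) {a i..b i}"
  shows "(\<Sum>r\<in>res_of ts pth a b w \<tau> i. g r) = (\<Sum>k = a i..b i. g (pth i k, departure ts pth a w \<tau> i k))"
  unfolding res_of_def
  by (subst sum.reindex) (use assms in \<open>auto simp: inj_on_def\<close>)

lemma pot_ext:
  fixes pth :: "'i::finite \<Rightarrow> nat \<Rightarrow> 'e"
  assumes "finite T" "allres ts pth a b w \<tau> \<subseteq> T"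
  shows "pot ts pth a b R w \<tau> = (\<Sum>r\<in>T. Fsum R (card (coll ts pth a b w \<tau> (fst r) (snd r))) (fst r))"
  unfolding pot_def
  by (rule sum.mono_neutral_left) (use assms in \<open>auto simp: Fsum_0 coll_empty\<close>)

lemma finite_allres:
  fixes pth :: "'i::finite \<Rightarrow> nat \<Rightarrow> 'e"
  shows "finite (allres ts pth a b w \<tau>)"
  unfolding allres_def by (intro finite_imageI finite_SigmaI) auto

lemma sum_if_sub:
  assumes "finite T" "S \<subseteq> T"
  shows "(\<Sum>r\<in>T. (if r \<in> S then f r else (0::real))) = sum f S"
proof -
  have "(\<Sum>r\<in>T. (if r \<in> S then f r else (0::real))) = sum f (T \<inter> S)"
    by (rule sum.inter_restrict[OF assms(1), symmetric])
  also have "T \<inter> S = S" using assms(2) by blast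
  finally show ?thesis .
qed

lemma res_sub_T1: "T = allres ts pth a b w \<tau> \<union> allres ts pth a b w' \<tau> \<Longrightarrow> res_of ts pth a b w' \<tau> i \<subseteq> T"
  using res_sub[of ts pth a b w' \<tau> i] by blast

lemma res_sub_T2: "T = allres ts pth a b w \<tau> \<union> allres ts pth a b w' \<tau> \<Longrightarrow> res_of ts pth a b w \<tau> i \<subseteq> T"
  using res_sub[of ts pth a b w \<tau> i] by blast

lemma pot_diff:
  fixes pth :: "'i::finite \<Rightarrow> nat \<Rightarrow> 'e"
  assumes inj: "inj_on (pth i) {a i..b i}"
  shows "pot ts pth a b R (w(i:=x)) \<tau> - pot ts pth a b R w \<tau>
       = rew ts pth a b R i (w(i:=x)) \<tau> - rew ts pth a b R i w \<tau>"
proof -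
  let ?w' = "w(i:=x)"
  define T where "T = allres ts pth a b w \<tau> \<union> allres ts pth a b ?w' \<tau>"
  have fT: "finite T" unfolding T_def by (simp add: finite_allres)
  have "pot ts pth a b R ?w' \<tau> - pot ts pth a b R w \<tau>
     = (\<Sum>r\<in>T. Fsum R (card (coll ts pth a b ?w' \<tau> (fst r) (snd r))) (fst r)
              - Fsum R (card (coll ts pth a b w \<tau> (fst r) (snd r))) (fst r))"
  proof -
    have p1: "pot ts pth a b R w \<tau> = (\<Sum>r\<in>T. Fsum R (card (coll ts pth a b w \<tau> (fst r) (snd r))) (fst r))"
      by (rule pot_ext[OF fT]) (simp add: T_def)
    have p2: "pot ts pth a b R ?w' \<tau> = (\<Sum>r\<in>T. Fsum R (card (coll ts pth a b ?w' \<tau> (fst r) (snd r))) (fst r))"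
      by (rule pot_ext[OF fT]) (simp add: T_def)
    show ?thesis unfolding p1 p2 sum_subtractf by (rule refl)
  qed
  also have "\<dots> = (\<Sum>r\<in>T. (if r \<in> res_of ts pth a b ?w' \<tau> i then R (card (coll ts pth a b ?w' \<tau> (fst r) (snd r))) (fst r) else 0)
   - (if r \<in> res_of ts pth a b w \<tau> i then R (card (coll ts pth a b w \<tau> (fst r) (snd r))) (fst r) else 0))"
  proof (intro sum.cong refl)
    fix r :: "'e \<times> nat"
    show "Fsum R (card (coll ts pth a b ?w' \<tau> (fst r) (snd r))) (fst r)
              - Fsum R (card (coll ts pth a b w \<tau> (fst r) (snd r))) (fst r) =
      (if r \<in> res_of ts pth a b ?w' \<tau> i then R (card (coll ts pth a b ?w' \<tau> (fst r) (snd r))) (fst r) else 0)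
   - (if r \<in> res_of ts pth a b w \<tau> i then R (card (coll ts pth a b w \<tau> (fst r) (snd r))) (fst r) else 0)"
      using Fsum_diff[of R ts pth a b w i x \<tau> "fst r" "snd r"] by (simp only: prod.collapse)
  qed
  also have "\<dots> = (\<Sum>r\<in>res_of ts pth a b ?w' \<tau> i. R (card (coll ts pth a b ?w' \<tau> (fst r) (snd r))) (fst r))
     - (\<Sum>r\<in>res_of ts pth a b w \<tau> i. R (card (coll ts pth a b w \<tau> (fst r) (snd r))) (fst r))"
    by (simp only: sum_subtractf sum_if_sub[OF fT] res_sub_T1[OF T_def] res_sub_T2[OF T_def])
  also have "\<dots> = rew ts pth a b R i (w(i:=x)) \<tau> - rew ts pth a b R i w \<tau>"
    unfolding rew_def
    by (simp only: res_reindex[of pth i a b, OF inj] fst_conv snd_conv)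
  finally show ?thesis .
qed

lemma card_coll_le:
  fixes pth :: "'i::finite \<Rightarrow> nat \<Rightarrow> 'e"
  shows "card (coll ts pth a b w \<tau> e t) \<le> CARD('i)"
  by (rule card_mono) auto

lemma R_bound:
  fixes R :: "nat \<Rightarrow> 'e \<Rightarrow> real"
  shows "n \<le> N \<Longrightarrow> \<bar>R n e\<bar> \<le> (\<Sum>m\<le>N. \<bar>R m e\<bar>)"
  by (rule member_le_sum[of n "{..N}" "\<lambda>m. \<bar>R m e\<bar>"]) auto

lemma Fsum_bound: "n \<le> N \<Longrightarrow> \<bar>Fsum R n e\<bar> \<le> (\<Sum>m\<le>N. \<bar>(R m e :: real)\<bar>)"
  unfolding Fsum_def
  by (rule order_trans[OF sum_abs], rule sum_mono2) auto

lemma rew_bound: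
  fixes pth :: "'i::finite \<Rightarrow> nat \<Rightarrow> 'e" and R :: "nat \<Rightarrow> 'e \<Rightarrow> real"
  shows "\<bar>rew ts pth a b R i w \<tau>\<bar> \<le> (\<Sum>k = a i..b i. \<Sum>m\<le>CARD('i). \<bar>R m (pth i k)\<bar>)"
  unfolding rew_def
  by (rule order_trans[OF sum_abs], rule sum_mono, rule R_bound, rule card_coll_le)

lemma pot_bound:
  fixes pth :: "'i::finite \<Rightarrow> nat \<Rightarrow> 'e" and R :: "nat \<Rightarrow> 'e \<Rightarrow> real"
  shows "\<bar>pot ts pth a b R w \<tau>\<bar> \<le> (\<Sum>p\<in>(SIGMA j:UNIV. {a j..b j}). \<Sum>m\<le>CARD('i). \<bar>R m (pth (fst p) (snd p))\<bar>)"
proof -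
  define G where "G e = (\<Sum>m\<le>CARD('i). \<bar>R m e\<bar>)" for e
  define h where "h = (\<lambda>(j,k). (pth j k, departure ts pth a w \<tau> j k))"
  have "\<bar>pot ts pth a b R w \<tau>\<bar> \<le> (\<Sum>r\<in>allres ts pth a b w \<tau>. G (fst r))"
    unfolding pot_def G_def
    by (rule order_trans[OF sum_abs], rule sum_mono, rule Fsum_bound, rule card_coll_le)
  also have "\<dots> \<le> (\<Sum>p\<in>(SIGMA j:UNIV. {a j..b j}). (G \<circ> fst \<circ> h) p)"
    unfolding allres_def h_def[symmetric]
    by (rule order_trans[OF sum_image_le[where g="\<lambda>r. G (fst r)"]])
       (auto simp: G_def intro: finite_SigmaI sum_nonneg simp: comp_def)
  also have "\<dots> = (\<Sum>p\<in>(SIGMA j:UNIV. {a j..b j}). \<Sum>m\<le>CARD('i). \<bar>R m (pth (fst p) (snd p))\<bar>)"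
    by (rule sum.cong) (auto simp: h_def G_def)
  finally show ?thesis .
qed

lemma integrable_bdd:
  fixes f :: "'a \<Rightarrow> real"
  assumes "\<And>x. \<bar>f x\<bar> \<le> B"
  shows "integrable (measure_pmf P) f"
  by (rule measure_pmf.integrable_const_bound[where B=B]) (auto simp: assms)

lemma epg_nash:
  assumes "exact_potential_game A u" "finite (Pi UNIV A)" "Pi UNIV A \<noteq> {}"
  shows "\<exists>w. pure_nash A u w"
proof -
  obtain \<Phi> :: "('a \<Rightarrow> 'b) \<Rightarrow> real" where phi: "\<forall>w \<in> Pi UNIV A. \<forall>i. \<forall>x \<in> A i.
        u i (w(i := x)) - u i w = \<Phi> (w(i := x)) - \<Phi> w"
    using assms(1) unfolding exact_potential_game_def by blast
  have "Max (\<Phi> ` Pi UNIV A) \<in> \<Phi> ` Pi UNIV A"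
    using assms(2,3) by (intro Max_in) auto
  then obtain w where w: "w \<in> Pi UNIV A" "\<Phi> w = Max (\<Phi> ` Pi UNIV A)" by auto
  have "pure_nash A u w"
    unfolding pure_nash_def
  proof (intro conjI allI ballI)
    fix i x assume x: "x \<in> A i"
    have "w(i:=x) \<in> Pi UNIV A" using w(1) x by auto
    then have "\<Phi> (w(i:=x)) \<le> \<Phi> w" using w(2) assms(2) by auto
    then show "u i (w(i := x)) \<le> u i w" using phi w(1) x by fastforce
  qed (use w in auto)
  then show ?thesis by blast
qed

theorem corollary2:
  fixes src tgt :: "'e \<Rightarrow> 'v"
    and pth :: "'i::finite \<Rightarrow> nat \<Rightarrow> 'e"
    and len a b :: "'i \<Rightarrow> nat"
    and tstar :: nat
    and W :: "'i \<Rightarrow> (nat \<Rightarrow> nat) set"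
    and R :: "nat \<Rightarrow> 'e \<Rightarrow> real"
    and \<Lambda> :: "'i \<Rightarrow> (nat \<Rightarrow> nat) \<Rightarrow> real"
    and P :: "('e, 'i) realization pmf"
  assumes path_conn: "\<And>i k. 1 \<le> k \<Longrightarrow> k < len i \<Longrightarrow> tgt (pth i k) = src (pth i (Suc k))"
    and path_simple: "\<And>i. inj_on (pth i) {1..len i}"
    and ab: "\<And>i. 1 \<le> a i \<and> a i \<le> b i \<and> b i \<le> len i"
    and W_fin: "\<And>i. finite (W i)"
    and W_ne: "\<And>i. W i \<noteq> {}"
  shows "exact_potential_game W (exp_utility P tstar pth a b R \<Lambda>)
       \<and> (\<exists>w. pure_nash W (exp_utility P tstar pth a b R \<Lambda>) w)"
proof -
  let ?u = "exp_utility P tstar pth a b R \<Lambda>"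
  let ?E = "measure_pmf.expectation P"
  have inj: "inj_on (pth i) {a i..b i}" for i
    by (rule inj_on_subset[OF path_simple]) (use ab[of i] in auto)
  have int_rew: "integrable (measure_pmf P) (rew tstar pth a b R i w)" for i w
    by (rule integrable_bdd, rule rew_bound)
  have int_pot: "integrable (measure_pmf P) (pot tstar pth a b R w)" for w
    by (rule integrable_bdd, rule pot_bound)
  have util: "?u i w = ?E (rew tstar pth a b R i w) - \<Lambda> i (w i)" for i w
  proof -
    have "?u i w = ?E (\<lambda>\<tau>. rew tstar pth a b R i w \<tau> - \<Lambda> i (w i))"
      unfolding exp_utility_def utility_def rew_def ..
    also have "\<dots> = ?E (rew tstar pth a b R i w) - \<Lambda> i (w i)"
      by (subst Bochner_Integration.integral_diff[OF int_rew]) auto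
    finally show ?thesis .
  qed
  define \<Phi> where "\<Phi> w = ?E (pot tstar pth a b R w) - (\<Sum>j\<in>UNIV. \<Lambda> j (w j))" for w
  have key: "?u i (w(i := x)) - ?u i w = \<Phi> (w(i := x)) - \<Phi> w" for i w x
  proof -
    have e1: "?E (rew tstar pth a b R i (w(i:=x))) - ?E (rew tstar pth a b R i w)
        = ?E (pot tstar pth a b R (w(i:=x))) - ?E (pot tstar pth a b R w)"
    proof -
      have "?E (rew tstar pth a b R i (w(i:=x))) - ?E (rew tstar pth a b R i w)
          = ?E (\<lambda>\<tau>. rew tstar pth a b R i (w(i:=x)) \<tau> - rew tstar pth a b R i w \<tau>)"
        by (rule Bochner_Integration.integral_diff[OF int_rew int_rew, symmetric])
      also have "\<dots> = ?E (\<lambda>\<tau>. pot tstar pth a b R (w(i:=x)) \<tau> - pot tstar pth a b R w \<tau>)"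
        by (simp add: pot_diff[of pth i a b, OF inj])
      also have "\<dots> = ?E (pot tstar pth a b R (w(i:=x))) - ?E (pot tstar pth a b R w)"
        by (rule Bochner_Integration.integral_diff[OF int_pot int_pot])
      finally show ?thesis .
    qed
    have e2: "(\<Sum>j\<in>UNIV. \<Lambda> j ((w(i:=x)) j)) - (\<Sum>j\<in>UNIV. \<Lambda> j (w j)) = \<Lambda> i x - \<Lambda> i (w i)"
    proof -
      have "(\<Sum>j\<in>UNIV. \<Lambda> j ((w(i:=x)) j)) = \<Lambda> i x + (\<Sum>j\<in>UNIV-{i}. \<Lambda> j ((w(i:=x)) j))"
        by (subst sum.remove[of UNIV i]) auto
      also have "(\<Sum>j\<in>UNIV-{i}. \<Lambda> j ((w(i:=x)) j)) = (\<Sum>j\<in>UNIV-{i}. \<Lambda> j (w j))"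
        by (rule sum.cong) auto
      moreover have "(\<Sum>j\<in>UNIV. \<Lambda> j (w j)) = \<Lambda> i (w i) + (\<Sum>j\<in>UNIV-{i}. \<Lambda> j (w j))"
        by (subst sum.remove[of UNIV i]) auto
      ultimately show ?thesis by simp
    qed
    show ?thesis using e1 e2 unfolding util \<Phi>_def by simp
  qed
  have epg: "exact_potential_game W ?u"
    unfolding exact_potential_game_def using key by blast
  have fin: "finite (Pi UNIV W)"
    unfolding PiE_UNIV_domain[symmetric] by (rule finite_PiE) (auto simp: W_fin)
  have "(\<lambda>i. SOME x. x \<in> W i) \<in> Pi UNIV W"
    using W_ne by (simp add: Pi_def some_in_eq)
  then have ne: "Pi UNIV W \<noteq> {}" by blast
  show ?thesis using epg epg_nash[OF epg fin ne] by blast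
qed

end
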